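(* The structure $\mathbb{C}_2=(\{0,1\};\neq,\{0\},\{1\})$ pp-constructs the structure $\mathbb{H}=(\{0,1,2\};\mu_2,\tau_0,\tau_1,\psi_2',\rho_2,\{0,2\},\{1,2\},\{0\},\{1\},\{2\})$.
   Context: Relations on $\{0,1,2\}$: $\mu_2$ is the equivalence relation with classes $\{0,1\},\{2\}$; $\rho_2=\{0,1,2\}^2\setminus\mu_2$; $\psi_2'=\{(0,1),(1,0)\}$; $\tau_0=\{(0,0),(1,0),(2,1)\}$; $\tau_1=\{(0,1),(1,1),(2,0)\}$. A relation is pp-definable in $\mathbb{A}$ if definable by a formula using the relations of $\mathbb{A}$, equality, conjunction and existential quantification. A pp-power of $\mathbb{A}$ is a structure isomorphic to one with domain $A^n$ whose $k$-ary relations, viewed as $kn$-ary relations on $A$, are pp-definable in $\mathbb{A}$. $\mathbb{A}$ pp-constructs $\mathbb{B}$ if $\mathbb{B}$ is homomorphically equivalent (homomorphisms in both directions) to a pp-power of $\mathbb{A}$. *)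

theory Defs
  imports Main
begin

text \<open>A relational structure: a domain together with a list of relations,
  each given with its arity; a k-ary relation is a set of lists of length k.\<close>
type_synonym 'a struct = "'a set \<times> (nat \<times> 'a list set) list"

definition dom_of :: "'a struct \<Rightarrow> 'a set" where
  "dom_of S = fst S"

definition rels_of :: "'a struct \<Rightarrow> (nat \<times> 'a list set) list" where
  "rels_of S = snd S"

definition wf_struct :: "'a struct \<Rightarrow> bool" where
  "wf_struct S \<longleftrightarrow> dom_of S \<noteq> {} \<and>
     (\<forall>(k, R) \<in> set (rels_of S). R \<subseteq> {xs. length xs = k \<and> set xs \<subseteq> dom_of S})"

definition signature :: "'a struct \<Rightarrow> nat list" where
  "signature S = map fst (rels_of S)"

definition is_hom :: "('a \<Rightarrow> 'b) \<Rightarrow> 'a struct \<Rightarrow> 'b struct \<Rightarrow> bool" where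
  "is_hom h A B \<longleftrightarrow> signature A = signature B \<and> h ` dom_of A \<subseteq> dom_of B \<and>
     (\<forall>j < length (rels_of A). \<forall>xs \<in> snd (rels_of A ! j). map h xs \<in> snd (rels_of B ! j))"

definition hom_equiv :: "'a struct \<Rightarrow> 'b struct \<Rightarrow> bool" where
  "hom_equiv A B \<longleftrightarrow> (\<exists>h. is_hom h A B) \<and> (\<exists>g. is_hom g B A)"

text \<open>Primitive positive formulas over a relational signature; variables are naturals,
  relation symbols are indices into the relation list.\<close>
datatype ppf = PTrue | PRel nat "nat list" | PEq nat nat | PConj ppf ppf | PEx nat ppf

fun pp_sat :: "'a struct \<Rightarrow> ppf \<Rightarrow> (nat \<Rightarrow> 'a) \<Rightarrow> bool" where
  "pp_sat A PTrue s = True"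
| "pp_sat A (PRel j vs) s = (j < length (rels_of A) \<and> length vs = fst (rels_of A ! j) \<and>
      map s vs \<in> snd (rels_of A ! j))"
| "pp_sat A (PEq u v) s = (s u = s v)"
| "pp_sat A (PConj p q) s = (pp_sat A p s \<and> pp_sat A q s)"
| "pp_sat A (PEx v p) s = (\<exists>a \<in> dom_of A. pp_sat A p (s(v := a)))"

text \<open>A m-ary relation R is pp-definable in A if it is the set of tuples (values of the
  variables 0..m-1) satisfying some pp-formula (further free variables are
  implicitly existentially quantified over the domain).\<close>
definition pp_definable :: "'a struct \<Rightarrow> nat \<Rightarrow> 'a list set \<Rightarrow> bool" where
  "pp_definable A m R \<longleftrightarrow> (\<exists>\<phi>. R = {map s [0..<m] | s. (\<forall>i. s i \<in> dom_of A) \<and> pp_sat A \<phi> s})"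

definition is_pp_power :: "'a struct \<Rightarrow> nat \<Rightarrow> 'a list struct \<Rightarrow> bool" where
  "is_pp_power A n P \<longleftrightarrow> n \<ge> 1 \<and> wf_struct P \<and>
     dom_of P = {xs. length xs = n \<and> set xs \<subseteq> dom_of A} \<and>
     (\<forall>(k, R) \<in> set (rels_of P). pp_definable A (k * n) (concat ` R))"

definition pp_constructs :: "'a struct \<Rightarrow> 'b struct \<Rightarrow> bool" where
  "pp_constructs A B \<longleftrightarrow> (\<exists>n P. is_pp_power A n P \<and> hom_equiv B P)"

definition C2 :: "nat struct" where
  "C2 = ({0, 1}, [(2, {[x, y] | x y. x \<in> {0, 1} \<and> y \<in> {0, 1} \<and> x \<noteq> y}),
                  (1, {[0]}), (1, {[1]})])"

definition D3 :: "nat set" where "D3 = {0, 1, 2}"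

definition mu2 :: "nat list set" where
  "mu2 = {[x, y] | x y. (x \<in> {0, 1} \<and> y \<in> {0, 1}) \<or> (x = 2 \<and> y = 2)}"

definition rho2 :: "nat list set" where
  "rho2 = {[x, y] | x y. x \<in> D3 \<and> y \<in> D3} - mu2"

definition psi2' :: "nat list set" where
  "psi2' = {[0, 1], [1, 0]}"

definition tau0 :: "nat list set" where
  "tau0 = {[0, 0], [1, 0], [2, 1]}"

definition tau1 :: "nat list set" where
  "tau1 = {[0, 1], [1, 1], [2, 0]}"

definition H :: "nat struct" where
  "H = (D3, [(2, mu2), (2, tau0), (2, tau1), (2, psi2'), (2, rho2),
             (1, {[0], [2]}), (1, {[1], [2]}), (1, {[0]}), (1, {[1]}), (1, {[2]})])"

end

theory Submission
  imports Defs
begin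

lemma dom_C2: "dom_of C2 = {0,1}" by (simp add: C2_def dom_of_def)

lemma pp_def_intro:
  assumes "\<forall>xs\<in>R. length xs = m \<and> set xs \<subseteq> {0,1} \<and> pp_sat C2 \<phi> (\<lambda>i. if i<m then xs!i else 0)"
      and "\<forall>s. (\<forall>i. s i \<in> {0,1}) \<and> pp_sat C2 \<phi> s \<longrightarrow> map s [0..<m] \<in> R"
  shows "pp_definable C2 m R"
  unfolding pp_definable_def dom_C2
proof (intro exI[of _ \<phi>] set_eqI iffI)
  fix xs assume x: "xs \<in> R"
  let ?s = "\<lambda>i. if i<m then xs!i else (0::nat)"
  have L: "length xs = m" and S: "set xs \<subseteq> {0,1}" and P: "pp_sat C2 \<phi> ?s"
    using assms(1) x by auto
  have "xs = map ?s [0..<m]" by (rule nth_equalityI) (simp_all add: L)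
  moreover have "\<forall>i. ?s i \<in> {0,1}"
  proof
    fix i show "?s i \<in> {0,1}"
    proof (cases "i < m")
      case True then have "xs ! i \<in> set xs" using L by simp
      then show ?thesis using S True by auto
    qed simp
  qed
  ultimately show "xs \<in> {map s [0..<m] |s. (\<forall>i. s i \<in> {0, 1}) \<and> pp_sat C2 \<phi> s}"
    using P by blast
next
  fix xs assume "xs \<in> {map s [0..<m] |s. (\<forall>i. s i \<in> {0, 1}) \<and> pp_sat C2 \<phi> s}"
  then show "xs \<in> R" using assms(2) by blast
qed

lemma map4: "map s [0..<4] = [s 0, s 1, s 2, s 3]" by (simp add: eval_nat_numeral upt_rec)
lemma map2: "map s [0..<2] = [s 0, s 1]" by (simp add: eval_nat_numeral upt_rec)
lemma sat_neq[simp]: "pp_sat C2 (PRel j [i,k]) s \<longleftrightarrow> j = 0 \<and> s i \<in> {0,1} \<and> s k \<in> {0,1} \<and> s i \<noteq> s k"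
  by (cases j; auto simp: C2_def rels_of_def pp_sat.simps(2) nth_Cons split: nat.splits)
lemma sat_c[simp]: "pp_sat C2 (PRel j [i]) s \<longleftrightarrow> (j = 1 \<and> s i = 0) \<or> (j = 2 \<and> s i = 1)"
  by (cases j; auto simp: C2_def rels_of_def pp_sat.simps(2) nth_Cons split: nat.splits)

declare pp_sat.simps(2)[simp del]

definition PP :: "nat list struct" where
  "PP = ({xs. length xs = 2 \<and> set xs \<subseteq> {0,1}}, [(2, {[[0, 0], [0, 0]], [[0, 0], [0, 1]], [[0, 1], [0, 0]], [[0, 1], [0, 1]], [[1, 0], [1, 0]], [[1, 0], [1, 1]], [[1, 1], [1, 0]], [[1, 1], [1, 1]]}),
    (2, {[[0, 0], [0, 0]], [[0, 1], [0, 0]], [[1, 0], [0, 1]], [[1, 1], [0, 1]]}),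
    (2, {[[0, 0], [0, 1]], [[0, 1], [0, 1]], [[1, 0], [0, 0]], [[1, 1], [0, 0]]}),
    (2, {[[0, 0], [0, 1]], [[0, 1], [0, 0]]}),
    (2, {[[0, 0], [1, 0]], [[0, 0], [1, 1]], [[0, 1], [1, 0]], [[0, 1], [1, 1]], [[1, 0], [0, 0]], [[1, 0], [0, 1]], [[1, 1], [0, 0]], [[1, 1], [0, 1]]}),
    (1, {[[0, 0]], [[1, 0]]}),
    (1, {[[0, 1]], [[1, 0]]}),
    (1, {[[0, 0]]}),
    (1, {[[0, 1]]}),
    (1, {[[1, 0]]})])"

lemma pd0: "pp_definable C2 4 (concat ` {[[0, 0], [0, 0]], [[0, 0], [0, 1]], [[0, 1], [0, 0]], [[0, 1], [0, 1]], [[1, 0], [1, 0]], [[1, 0], [1, 1]], [[1, 1], [1, 0]], [[1, 1], [1, 1]]})"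
proof -
  have e: "concat ` {[[0, 0], [0, 0]], [[0, 0], [0, 1]], [[0, 1], [0, 0]], [[0, 1], [0, 1]], [[1, 0], [1, 0]], [[1, 0], [1, 1]], [[1, 1], [1, 0]], [[1, 1], [1, 1]]} = {[0, 0, 0, 0], [0, 0, 0, 1], [0, 1, 0, 0], [0, 1, 0, 1], [1, 0, 1, 0], [1, 0, 1, 1], [1, 1, 1, 0], [1, 1, 1, 1] :: nat list}" by simp
  show ?thesis unfolding e
    apply (rule pp_def_intro[where \<phi>="PEq 0 2"])
     apply simp
    apply (intro allI impI, elim conjE)
    subgoal premises p for s using p(1)[rule_format, of 0] p(1)[rule_format, of 1] p(1)[rule_format, of 2] p(1)[rule_format, of 3] p(2)
      by (simp add: map4; (elim disjE; simp)?)
    done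
qed

lemma pd1: "pp_definable C2 4 (concat ` {[[0, 0], [0, 0]], [[0, 1], [0, 0]], [[1, 0], [0, 1]], [[1, 1], [0, 1]]})"
proof -
  have e: "concat ` {[[0, 0], [0, 0]], [[0, 1], [0, 0]], [[1, 0], [0, 1]], [[1, 1], [0, 1]]} = {[0, 0, 0, 0], [0, 1, 0, 0], [1, 0, 0, 1], [1, 1, 0, 1] :: nat list}" by simp
  show ?thesis unfolding e
    apply (rule pp_def_intro[where \<phi>="PConj (PEq 0 3) (PRel 1 [2])"])
     apply simp
    apply (intro allI impI, elim conjE)
    subgoal premises p for s using p(1)[rule_format, of 0] p(1)[rule_format, of 1] p(1)[rule_format, of 2] p(1)[rule_format, of 3] p(2)
      by (simp add: map4; (elim disjE; simp)?)
    done
qed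

lemma pd2: "pp_definable C2 4 (concat ` {[[0, 0], [0, 1]], [[0, 1], [0, 1]], [[1, 0], [0, 0]], [[1, 1], [0, 0]]})"
proof -
  have e: "concat ` {[[0, 0], [0, 1]], [[0, 1], [0, 1]], [[1, 0], [0, 0]], [[1, 1], [0, 0]]} = {[0, 0, 0, 1], [0, 1, 0, 1], [1, 0, 0, 0], [1, 1, 0, 0] :: nat list}" by simp
  show ?thesis unfolding e
    apply (rule pp_def_intro[where \<phi>="PConj (PRel 0 [0,3]) (PRel 1 [2])"])
     apply simp
    apply (intro allI impI, elim conjE)
    subgoal premises p for s using p(1)[rule_format, of 0] p(1)[rule_format, of 1] p(1)[rule_format, of 2] p(1)[rule_format, of 3] p(2)
      by (simp add: map4; (elim disjE; simp)?)
    done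
qed

lemma pd3: "pp_definable C2 4 (concat ` {[[0, 0], [0, 1]], [[0, 1], [0, 0]]})"
proof -
  have e: "concat ` {[[0, 0], [0, 1]], [[0, 1], [0, 0]]} = {[0, 0, 0, 1], [0, 1, 0, 0] :: nat list}" by simp
  show ?thesis unfolding e
    apply (rule pp_def_intro[where \<phi>="PConj (PRel 1 [0]) (PConj (PEq 0 2) (PConj (PRel 0 [1,3]) (PRel 1 [2])))"])
     apply simp
    apply (intro allI impI, elim conjE)
    subgoal premises p for s using p(1)[rule_format, of 0] p(1)[rule_format, of 1] p(1)[rule_format, of 2] p(1)[rule_format, of 3] p(2)
      by (simp add: map4; (elim disjE; simp)?)
    done
qed

lemma pd4: "pp_definable C2 4 (concat ` {[[0, 0], [1, 0]], [[0, 0], [1, 1]], [[0, 1], [1, 0]], [[0, 1], [1, 1]], [[1, 0], [0, 0]], [[1, 0], [0, 1]], [[1, 1], [0, 0]], [[1, 1], [0, 1]]})"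
proof -
  have e: "concat ` {[[0, 0], [1, 0]], [[0, 0], [1, 1]], [[0, 1], [1, 0]], [[0, 1], [1, 1]], [[1, 0], [0, 0]], [[1, 0], [0, 1]], [[1, 1], [0, 0]], [[1, 1], [0, 1]]} = {[0, 0, 1, 0], [0, 0, 1, 1], [0, 1, 1, 0], [0, 1, 1, 1], [1, 0, 0, 0], [1, 0, 0, 1], [1, 1, 0, 0], [1, 1, 0, 1] :: nat list}" by simp
  show ?thesis unfolding e
    apply (rule pp_def_intro[where \<phi>="PRel 0 [0,2]"])
     apply simp
    apply (intro allI impI, elim conjE)
    subgoal premises p for s using p(1)[rule_format, of 0] p(1)[rule_format, of 1] p(1)[rule_format, of 2] p(1)[rule_format, of 3] p(2)
      by (simp add: map4; (elim disjE; simp)?)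
    done
qed

lemma pd5: "pp_definable C2 2 (concat ` {[[0, 0]], [[1, 0]]})"
proof -
  have e: "concat ` {[[0, 0]], [[1, 0]]} = {[0, 0], [1, 0] :: nat list}" by simp
  show ?thesis unfolding e
    apply (rule pp_def_intro[where \<phi>="PRel 1 [1]"])
     apply simp
    apply (intro allI impI, elim conjE)
    subgoal premises p for s using p(1)[rule_format, of 0] p(1)[rule_format, of 1] p(1)[rule_format, of 2] p(1)[rule_format, of 3] p(2)
      by (simp add: map2; (elim disjE; simp)?)
    done
qed

lemma pd6: "pp_definable C2 2 (concat ` {[[0, 1]], [[1, 0]]})"
proof -
  have e: "concat ` {[[0, 1]], [[1, 0]]} = {[0, 1], [1, 0] :: nat list}" by simp
  show ?thesis unfolding e
    apply (rule pp_def_intro[where \<phi>="PRel 0 [0,1]"])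
     apply simp
    apply (intro allI impI, elim conjE)
    subgoal premises p for s using p(1)[rule_format, of 0] p(1)[rule_format, of 1] p(1)[rule_format, of 2] p(1)[rule_format, of 3] p(2)
      by (simp add: map2; (elim disjE; simp)?)
    done
qed

lemma pd7: "pp_definable C2 2 (concat ` {[[0, 0]]})"
proof -
  have e: "concat ` {[[0, 0]]} = {[0, 0] :: nat list}" by simp
  show ?thesis unfolding e
    apply (rule pp_def_intro[where \<phi>="PConj (PRel 1 [0]) (PRel 1 [1])"])
     apply simp
    apply (intro allI impI, elim conjE)
    subgoal premises p for s using p(1)[rule_format, of 0] p(1)[rule_format, of 1] p(1)[rule_format, of 2] p(1)[rule_format, of 3] p(2)
      by (simp add: map2; (elim disjE; simp)?)
    done
qed

lemma pd8: "pp_definable C2 2 (concat ` {[[0, 1]]})"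
proof -
  have e: "concat ` {[[0, 1]]} = {[0, 1] :: nat list}" by simp
  show ?thesis unfolding e
    apply (rule pp_def_intro[where \<phi>="PConj (PRel 1 [0]) (PRel 2 [1])"])
     apply simp
    apply (intro allI impI, elim conjE)
    subgoal premises p for s using p(1)[rule_format, of 0] p(1)[rule_format, of 1] p(1)[rule_format, of 2] p(1)[rule_format, of 3] p(2)
      by (simp add: map2; (elim disjE; simp)?)
    done
qed

lemma pd9: "pp_definable C2 2 (concat ` {[[1, 0]]})"
proof -
  have e: "concat ` {[[1, 0]]} = {[1, 0] :: nat list}" by simp
  show ?thesis unfolding e
    apply (rule pp_def_intro[where \<phi>="PConj (PRel 2 [0]) (PRel 1 [1])"])
     apply simp
    apply (intro allI impI, elim conjE)
    subgoal premises p for s using p(1)[rule_format, of 0] p(1)[rule_format, of 1] p(1)[rule_format, of 2] p(1)[rule_format, of 3] p(2)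
      by (simp add: map2; (elim disjE; simp)?)
    done
qed


lemma pp_power: "is_pp_power C2 2 PP"
  unfolding is_pp_power_def
proof (intro conjI)
  show "wf_struct PP"
    unfolding wf_struct_def PP_def dom_of_def rels_of_def by (auto intro: exI[of _ "[0,0::nat]"])
  show "dom_of PP = {xs. length xs = 2 \<and> set xs \<subseteq> dom_of C2}"
    unfolding dom_C2 by (simp add: PP_def dom_of_def)
  show "\<forall>(k, R)\<in>set (rels_of PP). pp_definable C2 (k * 2) (concat ` R)"
    unfolding PP_def rels_of_def
    using pd0 pd1 pd2 pd3 pd4 pd5 pd6 pd7 pd8 pd9 by simp
qed simp

definition hh :: "nat \<Rightarrow> nat list" where
  "hh x = (if x = 0 then [0,0] else if x = 1 then [0,1] else [1,0])"

definition gg :: "nat list \<Rightarrow> nat" where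
  "gg xs = (if xs = [0,0] then 0 else if xs = [0,1] then 1 else 2)"

lemma less10: "(j::nat) < 10 \<Longrightarrow> j = 0 \<or> j = 1 \<or> j = 2 \<or> j = 3 \<or> j = 4 \<or> j = 5 \<or> j = 6 \<or> j = 7 \<or> j = 8 \<or> j = 9"
  by auto

lemma lenH: "length (rels_of H) = 10" by (simp add: H_def rels_of_def)

lemma hom1: "is_hom hh H PP"
  unfolding is_hom_def signature_def lenH
proof (intro conjI allI impI ballI)
  show "map fst (rels_of H) = map fst (rels_of PP)" by (simp add: H_def PP_def rels_of_def)
  show "hh ` dom_of H \<subseteq> dom_of PP" by (auto simp: H_def PP_def dom_of_def hh_def)
  fix j xs assume j: "j < 10" and xs: "xs \<in> snd (rels_of H ! j)"
  from less10[OF j] xs show "map hh xs \<in> snd (rels_of PP ! j)"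
    by (elim disjE) (auto simp: H_def PP_def rels_of_def hh_def mu2_def rho2_def D3_def tau0_def tau1_def psi2'_def)
qed

lemma hom2: "is_hom gg PP H"
  unfolding is_hom_def signature_def lenH
proof (intro conjI allI impI ballI)
  show "map fst (rels_of PP) = map fst (rels_of H)" by (simp add: H_def PP_def rels_of_def)
  show "gg ` dom_of PP \<subseteq> dom_of H" by (auto simp: H_def PP_def dom_of_def gg_def D3_def)
  fix j xs assume j: "j < length (rels_of PP)" and xs: "xs \<in> snd (rels_of PP ! j)"
  have "j < 10" using j by (simp add: PP_def rels_of_def)
  from less10[OF this] xs show "map gg xs \<in> snd (rels_of H ! j)"
    by (elim disjE) (auto simp: H_def PP_def rels_of_def gg_def mu2_def rho2_def D3_def tau0_def tau1_def psi2'_def)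
qed

theorem lemma6p3:
  shows "pp_constructs C2 H"
  unfolding pp_constructs_def hom_equiv_def using pp_power hom1 hom2 by blast

end
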